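(* For every partition $\lambda$ with $k$ parts and every $D\subseteq\widehat{\mathrm{dg}}(\lambda)$, \[ F_{\lambda,D}(X;t)=G_{\widehat{\boldsymbol\nu}(\lambda,D)}(X;t). \]
   Context: Let $\lambda=(\lambda_1\ge\dots\ge\lambda_k>0)$ be a partition; $\mathrm{dg}(\lambda)=\{(r,i):1\le i\le k,\ 1\le r\le\lambda_i\}$ ($(r,i)$ = row $r$ from the bottom, column $i$ from the left, columns bottom-justified of heights $\lambda_i$). $\widehat{\mathrm{dg}}(\lambda)$ is the set of cells not in row 1. A filling is $\sigma:\mathrm{dg}(\lambda)\to\mathbb Z_{>0}$, $x^\sigma=\prod_u x_{\sigma(u)}$; $\mathrm{Des}(\sigma)$ is the set of cells $(r,i)$, $r>1$, with $\sigma((r,i))>\sigma((r-1,i))$. An ordered pair of cells $(u,v)$, $u=(r,i)$, $v=(r',j)$, is attacking if either $r=r'$ and $i>j$, or $r=r'+1$ and $i<j$; it is an attacking inversion if $\sigma(u)>\sigma(v)$; $\widehat{\mathrm{inv}}(\sigma)$ is their number. $F_{\lambda,D}(X;t)=\sum_{\sigma:\mathrm{Des}(\sigma)=D}t^{\widehat{\mathrm{inv}}(\sigma)}x^\sigma$. Ribbons: a ribbon of size $m$ with descent set $S\subseteq\{1,\dots,m-1\}$ has cells labelled $1,\dots,m$ from northwest to southeast, cell $i+1$ lying directly below cell $i$ if $i\in S$ and directly to the right of cell $i$ otherwise; cell $i$ is assigned the diagonal $d=m-i+1$. A semistandard filling $\rho$ of it assigns positive integers with $\rho(i)\le\rho(i+1)$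 if $i\notin S$ and $\rho(i)>\rho(i+1)$ if $i\in S$. For a tuple of ribbons $\boldsymbol\nu=(\nu^{(1)},\dots,\nu^{(k)})$ and a tuple $\boldsymbol\rho$ of semistandard fillings, an inversion is a pair of cells $u\in\nu^{(i)}$, $v\in\nu^{(j)}$ with $\rho^{(i)}(u)>\rho^{(j)}(v)$ and either ($i<j$ and $d(u)=d(v)$) or ($i>j$ and $d(u)=d(v)+1$). The LLT polynomial is $G_{\boldsymbol\nu}(X;t)=\sum_{\boldsymbol\rho}t^{\mathrm{inv}(\boldsymbol\rho)}x^{\boldsymbol\rho}$, $x^{\boldsymbol\rho}=\prod_i\prod_{u}x_{\rho^{(i)}(u)}$. Finally $\widehat{\boldsymbol\nu}(\lambda,D)=(\nu_k,\nu_{k-1},\dots,\nu_1)$ where $\nu_j$ is the ribbon of size $\lambda_j$ with descent set $\{\lambda_j-r+1:(r,j)\in D\}$. *)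

theory Defs
  imports Main "HOL-Library.Multiset"
begin

text \<open>Partitions as lists (lambda_1 >= ... >= lambda_k > 0); lambda_i = lam ! (i-1).
 Cells (r,i): row r from the bottom, column i from the left, both 1-indexed.\<close>

definition is_partition :: "nat list \<Rightarrow> bool" where
  "is_partition lam \<longleftrightarrow> sorted_wrt (\<ge>) lam \<and> (\<forall>x\<in>set lam. 0 < x)"

definition dg :: "nat list \<Rightarrow> (nat \<times> nat) set" where
  "dg lam = {(r,i). 1 \<le> i \<and> i \<le> length lam \<and> 1 \<le> r \<and> r \<le> lam ! (i-1)}"

definition dghat :: "nat list \<Rightarrow> (nat \<times> nat) set" where
  "dghat lam = {(r,i). (r,i) \<in> dg lam \<and> r \<noteq> 1}"

definition fillings :: "nat list \<Rightarrow> (nat \<times> nat \<Rightarrow> nat) set" where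
  "fillings lam = {\<sigma>. (\<forall>u\<in>dg lam. 0 < \<sigma> u) \<and> (\<forall>u. u \<notin> dg lam \<longrightarrow> \<sigma> u = 0)}"

definition Des :: "nat list \<Rightarrow> (nat \<times> nat \<Rightarrow> nat) \<Rightarrow> (nat \<times> nat) set" where
  "Des lam \<sigma> = {(r,i). (r,i) \<in> dg lam \<and> r > 1 \<and> \<sigma> (r,i) > \<sigma> (r-1,i)}"

definition attacking :: "nat \<times> nat \<Rightarrow> nat \<times> nat \<Rightarrow> bool" where
  "attacking u v \<longleftrightarrow> (fst u = fst v \<and> snd u > snd v) \<or> (fst u = fst v + 1 \<and> snd u < snd v)"

definition inv_hat :: "nat list \<Rightarrow> (nat \<times> nat \<Rightarrow> nat) \<Rightarrow> nat" where
  "inv_hat lam \<sigma> = card {(u,v). u \<in> dg lam \<and> v \<in> dg lam \<and> attacking u v \<and> \<sigma> u > \<sigma> v}"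

text \<open>The monomial x^sigma is encoded by the multiset of entries.
 A formal power series in X and t with natural coefficients is encoded by its
 coefficient function: (multiset of variable indices) => (power of t) => coefficient.\<close>
definition F_series :: "nat list \<Rightarrow> (nat \<times> nat) set \<Rightarrow> nat multiset \<Rightarrow> nat \<Rightarrow> nat" where
  "F_series lam D \<alpha> n = card {\<sigma> \<in> fillings lam. Des lam \<sigma> = D \<and> inv_hat lam \<sigma> = n
      \<and> image_mset \<sigma> (mset_set (dg lam)) = \<alpha>}"

text \<open>Ribbons: (size m, descent set S). A tuple of ribbons is a list; the i-th ribbon
 (1-indexed) is nus ! (i-1). Cells of the tuple are pairs (i,c), c the label in ribbon i.\<close>
type_synonym ribbon = "nat \<times> nat set"

definition rcells :: "ribbon list \<Rightarrow> (nat \<times> nat) set" where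
  "rcells nus = {(i,c). 1 \<le> i \<and> i \<le> length nus \<and> 1 \<le> c \<and> c \<le> fst (nus ! (i-1))}"

definition rdiag :: "ribbon list \<Rightarrow> nat \<times> nat \<Rightarrow> nat" where
  "rdiag nus u = fst (nus ! (fst u - 1)) - snd u + 1"

definition ssfillings :: "ribbon list \<Rightarrow> (nat \<times> nat \<Rightarrow> nat) set" where
  "ssfillings nus = {\<rho>. (\<forall>u\<in>rcells nus. 0 < \<rho> u) \<and> (\<forall>u. u \<notin> rcells nus \<longrightarrow> \<rho> u = 0) \<and>
     (\<forall>i c. 1 \<le> i \<and> i \<le> length nus \<and> 1 \<le> c \<and> c < fst (nus ! (i-1)) \<longrightarrow>
        (c \<in> snd (nus ! (i-1)) \<longrightarrow> \<rho> (i,c) > \<rho> (i,c+1)) \<and>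
        (c \<notin> snd (nus ! (i-1)) \<longrightarrow> \<rho> (i,c) \<le> \<rho> (i,c+1)))}"

definition inv_llt :: "ribbon list \<Rightarrow> (nat \<times> nat \<Rightarrow> nat) \<Rightarrow> nat" where
  "inv_llt nus \<rho> = card {(u,v). u \<in> rcells nus \<and> v \<in> rcells nus \<and> \<rho> u > \<rho> v \<and>
     ((fst u < fst v \<and> rdiag nus u = rdiag nus v) \<or> (fst u > fst v \<and> rdiag nus u = rdiag nus v + 1))}"

definition G_series :: "ribbon list \<Rightarrow> nat multiset \<Rightarrow> nat \<Rightarrow> nat" where
  "G_series nus \<alpha> n = card {\<rho> \<in> ssfillings nus. inv_llt nus \<rho> = n
      \<and> image_mset \<rho> (mset_set (rcells nus)) = \<alpha>}"

definition nu_hat :: "nat list \<Rightarrow> (nat \<times> nat) set \<Rightarrow> ribbon list" where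
  "nu_hat lam D = map (\<lambda>j. (lam ! (j-1), {lam ! (j-1) - r + 1 | r. (r,j) \<in> D})) (rev [1..<length lam + 1])"

end

theory Submission
  imports Defs
begin

definition gcell :: "nat list \<Rightarrow> nat \<times> nat \<Rightarrow> nat \<times> nat" where
  "gcell lam u = (lam ! (length lam - fst u) - snd u + 1, length lam - fst u + 1)"

definition hcell :: "nat list \<Rightarrow> nat \<times> nat \<Rightarrow> nat \<times> nat" where
  "hcell lam v = (length lam - snd v + 1, lam ! (snd v - 1) - fst v + 1)"

lemma nu_len: "length (nu_hat lam D) = length lam"
  by (simp add: nu_hat_def del: upt_Suc)

lemma nu_nth:
  assumes "1 \<le> i" "i \<le> length lam"
  shows "nu_hat lam D ! (i-1) = (lam ! (length lam - i),
     {lam ! (length lam - i) - r + 1 | r. (r, length lam - i + 1) \<in> D})"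
proof -
  have e: "rev [1..<length lam + 1] ! (i-1) = length lam - i + 1"
    using assms by (simp add: rev_nth del: upt_Suc)
  have l: "i - 1 < length (rev [1..<length lam + 1])" using assms by (simp del: upt_Suc)
  have "nu_hat lam D ! (i-1) = (\<lambda>j. (lam ! (j-1), {lam ! (j-1) - r + 1 | r. (r,j) \<in> D})) (rev [1..<length lam + 1] ! (i-1))"
    unfolding nu_hat_def by (rule nth_map[OF l])
  also have "\<dots> = (lam ! (length lam - i),
     {lam ! (length lam - i) - r + 1 | r. (r, length lam - i + 1) \<in> D})"
    unfolding e by simp
  finally show ?thesis .
qed

lemma rcells_nu: "rcells (nu_hat lam D) =
   {(i,c). 1 \<le> i \<and> i \<le> length lam \<and> 1 \<le> c \<and> c \<le> lam ! (length lam - i)}"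
  unfolding rcells_def using nu_nth[of _ lam D] by (auto simp: nu_len)

lemma g_in: "u \<in> rcells (nu_hat lam D) \<Longrightarrow> gcell lam u \<in> dg lam"
  by (auto simp: rcells_nu gcell_def dg_def)

lemma h_in: "v \<in> dg lam \<Longrightarrow> hcell lam v \<in> rcells (nu_hat lam D)"
  by (auto simp: rcells_nu hcell_def dg_def)

lemma hg: "u \<in> rcells (nu_hat lam D) \<Longrightarrow> hcell lam (gcell lam u) = u"
  by (auto simp: rcells_nu gcell_def hcell_def)

lemma gh: "v \<in> dg lam \<Longrightarrow> gcell lam (hcell lam v) = v"
  by (auto simp: dg_def gcell_def hcell_def)

lemma rdiag_g: "u \<in> rcells (nu_hat lam D) \<Longrightarrow> rdiag (nu_hat lam D) u = fst (gcell lam u)"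
  using nu_nth[of "fst u" lam D] by (auto simp: rcells_nu gcell_def rdiag_def)

lemma snd_g: "u \<in> rcells (nu_hat lam D) \<Longrightarrow> v \<in> rcells (nu_hat lam D) \<Longrightarrow>
   (fst u < fst v) = (snd (gcell lam u) > snd (gcell lam v))"
  by (auto simp: rcells_nu gcell_def)

lemma snd_g2: "u \<in> rcells (nu_hat lam D) \<Longrightarrow> v \<in> rcells (nu_hat lam D) \<Longrightarrow>
   (fst u > fst v) = (snd (gcell lam u) < snd (gcell lam v))"
  by (auto simp: rcells_nu gcell_def)

definition Phi :: "nat list \<Rightarrow> (nat \<times> nat) set \<Rightarrow> (nat \<times> nat \<Rightarrow> nat) \<Rightarrow> (nat \<times> nat \<Rightarrow> nat)" where
  "Phi lam D \<sigma> = (\<lambda>u. if u \<in> rcells (nu_hat lam D) then \<sigma> (gcell lam u) else 0)"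

definition Psi :: "nat list \<Rightarrow> (nat \<times> nat) set \<Rightarrow> (nat \<times> nat \<Rightarrow> nat) \<Rightarrow> (nat \<times> nat \<Rightarrow> nat)" where
  "Psi lam D \<rho> = (\<lambda>v. if v \<in> dg lam then \<rho> (hcell lam v) else 0)"

lemma PsiPhi: "\<sigma> \<in> fillings lam \<Longrightarrow> Psi lam D (Phi lam D \<sigma>) = \<sigma>"
  unfolding Psi_def Phi_def fillings_def using h_in gh by fastforce

lemma PhiPsi: "\<forall>u. u \<notin> rcells (nu_hat lam D) \<longrightarrow> \<rho> u = 0 \<Longrightarrow> Phi lam D (Psi lam D \<rho>) = \<rho>"
  unfolding Psi_def Phi_def using g_in hg by fastforce

lemma Psi_fill: "\<rho> \<in> ssfillings (nu_hat lam D) \<Longrightarrow> Psi lam D \<rho> \<in> fillings lam"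
  unfolding Psi_def ssfillings_def fillings_def using h_in by fastforce

lemma mset_Phi: "image_mset (Phi lam D \<sigma>) (mset_set (rcells (nu_hat lam D))) = image_mset \<sigma> (mset_set (dg lam))"
proof -
  let ?R = "rcells (nu_hat lam D)"
  have "image_mset (Phi lam D \<sigma>) (mset_set ?R) = image_mset (\<sigma> \<circ> gcell lam) (mset_set ?R)"
    by (rule image_mset_cong) (cases "finite ?R", auto simp: Phi_def)
  also have "\<dots> = image_mset \<sigma> (image_mset (gcell lam) (mset_set ?R))"
    by (simp add: multiset.map_comp)
  also have "inj_on (gcell lam) ?R" by (metis hg inj_onI)
  hence "image_mset (gcell lam) (mset_set ?R) = mset_set (gcell lam ` ?R)" by (rule image_mset_mset_set)
  also have "gcell lam ` ?R = dg lam"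
  proof
    show "gcell lam ` ?R \<subseteq> dg lam" using g_in by blast
    show "dg lam \<subseteq> gcell lam ` ?R"
    proof
      fix x assume "x \<in> dg lam"
      thus "x \<in> gcell lam ` ?R" using h_in[of x lam D] gh[of x lam] by (metis image_eqI)
    qed
  qed
  finally show ?thesis .
qed

lemma inv_Phi: "inv_llt (nu_hat lam D) (Phi lam D \<sigma>) = inv_hat lam \<sigma>"
proof -
  let ?R = "rcells (nu_hat lam D)" and ?n = "nu_hat lam D"
  let ?A = "{(u,v). u \<in> ?R \<and> v \<in> ?R \<and> Phi lam D \<sigma> u > Phi lam D \<sigma> v \<and>
     ((fst u < fst v \<and> rdiag ?n u = rdiag ?n v) \<or> (fst u > fst v \<and> rdiag ?n u = rdiag ?n v + 1))}"
  let ?B = "{(u,v). u \<in> dg lam \<and> v \<in> dg lam \<and> attacking u v \<and> \<sigma> u > \<sigma> v}"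
  have "bij_betw (\<lambda>(u,v). (gcell lam u, gcell lam v)) ?A ?B"
  proof (rule bij_betw_byWitness[where f' = "\<lambda>(u,v). (hcell lam u, hcell lam v)"])
    show "\<forall>a\<in>?A. (\<lambda>(u,v). (hcell lam u, hcell lam v)) ((\<lambda>(u,v). (gcell lam u, gcell lam v)) a) = a"
      using hg by auto
    show "\<forall>a\<in>?B. (\<lambda>(u,v). (gcell lam u, gcell lam v)) ((\<lambda>(u,v). (hcell lam u, hcell lam v)) a) = a"
      using gh by auto
    have k1: "(gcell lam u, gcell lam v) \<in> ?B" if a: "(u,v) \<in> ?A" for u v
    proof -
      from a have u: "u \<in> ?R" and v: "v \<in> ?R" by auto
      have pu: "Phi lam D \<sigma> u = \<sigma> (gcell lam u)" "Phi lam D \<sigma> v = \<sigma> (gcell lam v)"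
        using u v by (simp_all add: Phi_def)
      have c: "attacking (gcell lam u) (gcell lam v)"
        using a rdiag_g[OF u] rdiag_g[OF v] snd_g[OF u v] snd_g2[OF u v]
        unfolding attacking_def by auto
      show ?thesis
        using a g_in[OF u] g_in[OF v] c pu by simp
    qed
    show "(\<lambda>(u,v). (gcell lam u, gcell lam v)) ` ?A \<subseteq> ?B"
    proof
      fix x assume "x \<in> (\<lambda>(u,v). (gcell lam u, gcell lam v)) ` ?A"
      then obtain u v where uv: "(u,v) \<in> ?A" and x: "x = (gcell lam u, gcell lam v)" by auto
      show "x \<in> ?B" unfolding x by (rule k1[OF uv])
    qed
    have k2: "(hcell lam u, hcell lam v) \<in> ?A" if a: "(u,v) \<in> ?B" for u v
    proof -
      from a have u0: "u \<in> dg lam" and v0: "v \<in> dg lam" by auto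
      have u: "hcell lam u \<in> ?R" and v: "hcell lam v \<in> ?R" using h_in u0 v0 by auto
      have pu: "Phi lam D \<sigma> (hcell lam u) = \<sigma> u" "Phi lam D \<sigma> (hcell lam v) = \<sigma> v"
        using u v gh[OF u0] gh[OF v0] by (simp_all add: Phi_def)
      have c: "attacking u v" using a by simp
      have c2: "(fst (hcell lam u) < fst (hcell lam v) \<and> rdiag ?n (hcell lam u) = rdiag ?n (hcell lam v)) \<or>
         (fst (hcell lam u) > fst (hcell lam v) \<and> rdiag ?n (hcell lam u) = rdiag ?n (hcell lam v) + 1)"
        using c rdiag_g[OF u] rdiag_g[OF v] snd_g[OF u v] snd_g2[OF u v] gh[OF u0] gh[OF v0]
        unfolding attacking_def by auto
      show ?thesis
        using a u v pu c2 by simp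
    qed
    show "(\<lambda>(u,v). (hcell lam u, hcell lam v)) ` ?B \<subseteq> ?A"
    proof
      fix x assume "x \<in> (\<lambda>(u,v). (hcell lam u, hcell lam v)) ` ?B"
      then obtain u v where uv: "(u,v) \<in> ?B" and x: "x = (hcell lam u, hcell lam v)" by auto
      show "x \<in> ?A" unfolding x by (rule k2[OF uv])
    qed
  qed
  thus ?thesis unfolding inv_llt_def inv_hat_def by (rule bij_betw_same_card)
qed

lemma S_mem:
  assumes D: "D \<subseteq> dghat lam" and i: "1 \<le> i" "i \<le> length lam" and c: "1 \<le> c" "c < lam ! (length lam - i)"
  shows "(c \<in> snd (nu_hat lam D ! (i-1))) = ((lam ! (length lam - i) - c + 1, length lam - i + 1) \<in> D)"
proof -
  let ?m = "lam ! (length lam - i)" and ?j = "length lam - i + 1"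
  have jm: "lam ! (?j - 1) = ?m" by simp
  have "c \<in> snd (nu_hat lam D ! (i-1)) \<longleftrightarrow> (\<exists>r. (r, ?j) \<in> D \<and> c = ?m - r + 1)"
    using nu_nth[OF i, of D] by auto
  also have "\<dots> \<longleftrightarrow> (?m - c + 1, ?j) \<in> D"
  proof
    assume "\<exists>r. (r, ?j) \<in> D \<and> c = ?m - r + 1"
    then obtain r where r: "(r, ?j) \<in> D" "c = ?m - r + 1" by blast
    have "r \<le> ?m" using D r(1) jm unfolding dghat_def dg_def by auto
    hence "r = ?m - c + 1" using r(2) c by linarith
    thus "(?m - c + 1, ?j) \<in> D" using r(1) by simp
  next
    assume "(?m - c + 1, ?j) \<in> D"
    moreover have "c = ?m - (?m - c + 1) + 1" using c by linarith
    ultimately show "\<exists>r. (r, ?j) \<in> D \<and> c = ?m - r + 1" by blast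
  qed
  finally show ?thesis .
qed

lemma desc:
  assumes D: "D \<subseteq> dghat lam" and s: "\<sigma> \<in> fillings lam"
  shows "Phi lam D \<sigma> \<in> ssfillings (nu_hat lam D) \<longleftrightarrow> Des lam \<sigma> = D"
proof -
  let ?n = "nu_hat lam D" and ?k = "length lam"
  have base: "(\<forall>u\<in>rcells ?n. 0 < Phi lam D \<sigma> u) \<and> (\<forall>u. u \<notin> rcells ?n \<longrightarrow> Phi lam D \<sigma> u = 0)"
    using s g_in unfolding fillings_def Phi_def by auto
  have val: "Phi lam D \<sigma> (i,c) = \<sigma> (lam ! (?k - i) - c + 1, ?k - i + 1)"
    "Phi lam D \<sigma> (i,c+1) = \<sigma> (lam ! (?k - i) - c, ?k - i + 1)"
    if "1 \<le> i" "i \<le> ?k" "1 \<le> c" "c < lam ! (?k - i)" for i c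
  proof -
    have "lam ! (?k - i) - (c+1) + 1 = lam ! (?k - i) - c" using that by linarith
    thus "Phi lam D \<sigma> (i,c) = \<sigma> (lam ! (?k - i) - c + 1, ?k - i + 1)"
      "Phi lam D \<sigma> (i,c+1) = \<sigma> (lam ! (?k - i) - c, ?k - i + 1)"
      using that by (auto simp: Phi_def rcells_nu gcell_def simp del: Suc_eq_plus1 add_Suc_right)
  qed
  have fstn: "fst (?n ! (i-1)) = lam ! (?k - i)" if "1 \<le> i" "i \<le> ?k" for i
    using nu_nth[OF that] by simp
  define P where "P = (\<forall>i c. 1 \<le> i \<and> i \<le> ?k \<and> 1 \<le> c \<and> c < lam ! (?k - i) \<longrightarrow>
     (((lam ! (?k - i) - c + 1, ?k - i + 1) \<in> D) = (\<sigma> (lam ! (?k - i) - c + 1, ?k - i + 1) > \<sigma> (lam ! (?k - i) - c, ?k - i + 1))))"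
  have eq1: "Phi lam D \<sigma> \<in> ssfillings ?n \<longleftrightarrow> P"
  proof -
    have "Phi lam D \<sigma> \<in> ssfillings ?n \<longleftrightarrow> (\<forall>i c. 1 \<le> i \<and> i \<le> ?k \<and> 1 \<le> c \<and> c < lam ! (?k - i) \<longrightarrow>
        (c \<in> snd (?n ! (i-1)) \<longrightarrow> Phi lam D \<sigma> (i,c) > Phi lam D \<sigma> (i,c+1)) \<and>
        (c \<notin> snd (?n ! (i-1)) \<longrightarrow> Phi lam D \<sigma> (i,c) \<le> Phi lam D \<sigma> (i,c+1)))"
      unfolding ssfillings_def using base fstn by (auto simp: nu_len)
    also have "\<dots> \<longleftrightarrow> P" unfolding P_def
    proof (intro iff_allI imp_cong refl)
      fix i c assume a: "1 \<le> i \<and> i \<le> ?k \<and> 1 \<le> c \<and> c < lam ! (?k - i)"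
      show "((c \<in> snd (?n ! (i-1)) \<longrightarrow> Phi lam D \<sigma> (i,c) > Phi lam D \<sigma> (i,c+1)) \<and>
        (c \<notin> snd (?n ! (i-1)) \<longrightarrow> Phi lam D \<sigma> (i,c) \<le> Phi lam D \<sigma> (i,c+1))) =
        (((lam ! (?k - i) - c + 1, ?k - i + 1) \<in> D) = (\<sigma> (lam ! (?k - i) - c + 1, ?k - i + 1) > \<sigma> (lam ! (?k - i) - c, ?k - i + 1)))"
        using S_mem[OF D, of i c] val[of i c] a by auto
    qed
    finally show ?thesis .
  qed
  have eq2: "P \<longleftrightarrow> Des lam \<sigma> = D"
  proof
    assume P
    have "(r,j) \<in> D \<longleftrightarrow> (r,j) \<in> Des lam \<sigma>" if rj: "(r,j) \<in> dg lam" "r > 1" for r j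
    proof -
      define i where "i = ?k - j + 1"
      define c where "c = lam ! (j-1) - r + 1"
      have ij: "1 \<le> i" "i \<le> ?k" "?k - i = j - 1" "?k - i + 1 = j" using rj unfolding i_def dg_def by auto
      have cr: "1 \<le> c" "c < lam ! (?k - i)" "lam ! (?k - i) - c + 1 = r" "lam ! (?k - i) - c = r - 1"
        using rj ij(3) unfolding c_def dg_def by auto
      have "((r,j) \<in> D) = (\<sigma> (r,j) > \<sigma> (r-1,j))"
        using \<open>P\<close>[unfolded P_def, rule_format, of i c] ij cr by simp
      thus ?thesis using rj unfolding Des_def by auto
    qed
    moreover have "D \<subseteq> {(r,j). (r,j) \<in> dg lam \<and> r > 1}" using D unfolding dghat_def dg_def by fastforce
    moreover have "Des lam \<sigma> \<subseteq> {(r,j). (r,j) \<in> dg lam \<and> r > 1}" unfolding Des_def by auto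
    ultimately show "Des lam \<sigma> = D" by blast
  next
    assume des: "Des lam \<sigma> = D"
    show P unfolding P_def
    proof (intro allI impI)
      fix i c assume a: "1 \<le> i \<and> i \<le> ?k \<and> 1 \<le> c \<and> c < lam ! (?k - i)"
      let ?r = "lam ! (?k - i) - c + 1" and ?j = "?k - i + 1"
      have dg: "(?r, ?j) \<in> dg lam" "?r > 1" "?r - 1 = lam ! (?k - i) - c" using a unfolding dg_def by auto
      show "((?r, ?j) \<in> D) = (\<sigma> (?r, ?j) > \<sigma> (lam ! (?k - i) - c, ?j))"
        using dg unfolding des[symmetric] Des_def by auto
    qed
  qed
  show ?thesis using eq1 eq2 by simp
qed

theorem mainTheorem4:
  fixes lam :: "nat list" and D :: "(nat \<times> nat) set"
  assumes "is_partition lam" and "D \<subseteq> dghat lam"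
  shows "F_series lam D = G_series (nu_hat lam D)"
proof (intro ext)
  fix \<alpha> n
  let ?n = "nu_hat lam D"
  let ?A = "{\<sigma> \<in> fillings lam. Des lam \<sigma> = D \<and> inv_hat lam \<sigma> = n
      \<and> image_mset \<sigma> (mset_set (dg lam)) = \<alpha>}"
  let ?B = "{\<rho> \<in> ssfillings ?n. inv_llt ?n \<rho> = n
      \<and> image_mset \<rho> (mset_set (rcells ?n)) = \<alpha>}"
  have "bij_betw (Phi lam D) ?A ?B"
  proof (rule bij_betw_byWitness[where f' = "Psi lam D"])
    show "\<forall>a\<in>?A. Psi lam D (Phi lam D a) = a" using PsiPhi by blast
    show "\<forall>a\<in>?B. Phi lam D (Psi lam D a) = a" using PhiPsi unfolding ssfillings_def by blast
    show "Phi lam D ` ?A \<subseteq> ?B"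
      using desc[OF assms(2)] inv_Phi mset_Phi by auto
    show "Psi lam D ` ?B \<subseteq> ?A"
    proof
      fix x assume "x \<in> Psi lam D ` ?B"
      then obtain \<rho> where r: "\<rho> \<in> ?B" and x: "x = Psi lam D \<rho>" by auto
      have f: "x \<in> fillings lam" using Psi_fill r x by auto
      have e: "Phi lam D x = \<rho>" using PhiPsi r x unfolding ssfillings_def by blast
      show "x \<in> ?A" using f r desc[OF assms(2) f] inv_Phi[of lam D x] mset_Phi[of lam D x] e by auto
    qed
  qed
  thus "F_series lam D \<alpha> n = G_series ?n \<alpha> n"
    unfolding F_series_def G_series_def by (rule bij_betw_same_card)
qed

end
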